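(* Let $\mathcal F$ be a saturated fusion system over a finite $p$-group $S$, let $H\le S$ be fully $\mathcal F$-normalized and $\mathcal F$-centric, $N_{\mathcal F}=N_{\mathcal F}(H)$, and let $K\in\mathcal F^c$. For every $(A,\overline\varphi)\in[N_{\mathcal F}\times K]$ we have $A=N^{N_{\mathcal F}}_{\overline\varphi}\cap H$.
   Context: Fusion system $\mathcal F$ over $S$: objects the subgroups of $S$, morphisms injective homomorphisms containing conjugations $c_s:x\mapsto sxs^{-1}$ ($s\in S$), each morphism's isomorphism onto its image and its inverse in $\mathcal F$; saturated. $\operatorname{Aut}_T(P)=\{c_x|_P:x\in N_T(P)\}$. Fully $\mathcal F$-normalized: $|N_S(P')|\le|N_S(P)|$ for all $P'$ $\mathcal F$-isomorphic to $P$ (likewise for other fusion systems). $\mathcal F$-centric: $C_S(P')\le P'$ for all such $P'$; $\mathcal F^c$ the set of these. $N_{\mathcal F}(H)$: fusion system over $N_S:=N_S(H)$ whose morphisms $A\to B$ are the $\varphi\in\operatorname{Hom}_{\mathcal F}(A,B)$ extending to a morphism $AH\to BH$ in $\mathcal F$. Orbit category: $\operatorname{Hom}_{\mathcal O(\mathcal F)}(P,Q)=\operatorname{Aut}_Q(Q)\backslash\operatorname{Hom}_{\mathcal F}(P,Q)$, $\overline\varphi$ the class of $\varphi$. $[H\times_{\mathcal F}K]$: among pairs $(A,\overline\varphi)$, $A\in\mathcal F^c$, $A\le H$, $\overline\varphi\in\operatorname{Hom}_{\mathcal O(\mathcal F)}(A,K)$, put $(A,\overline\varphi)\precsim(B,\overline\psi)$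 iff some $h\in H$ has $h^{-1}Ah\le B$ and $\overline\varphi\,\overline{c_h}=\overline\psi\,\overline\iota$; $[H\times_{\mathcal F}K]$ has one representative of each mutual-$\precsim$ class of maximal pairs. For $A,K\in\mathcal F^c$ with $A\le N_S$ and $\varphi\in\operatorname{Hom}_{\mathcal F}(A,K)$: ${}^{N_{\mathcal F}}_{\varphi}N=\{x\in N_K(\varphi(A)):\varphi^{-1}c_x\varphi\in\operatorname{Aut}_{N_{\mathcal F}}(A)\}$; $\varphi$ is an $N_{\mathcal F}$-top if $A$ is fully $N_{\mathcal F}$-normalized and, with $N^{N_{\mathcal F}}_\varphi=\{x\in N_{N_S}(A):c_x\in\varphi^{-1}\operatorname{Aut}_{{}^{N_{\mathcal F}}_{\varphi}N}(\varphi(A))\varphi\}$, $\operatorname{Aut}_{{}^{N_{\mathcal F}}_{\varphi}N}(\varphi(A))=\varphi\operatorname{Aut}_{N^{N_{\mathcal F}}_\varphi}(A)\varphi^{-1}$. This property and $N^{N_{\mathcal F}}_\varphi$ depend only on $\overline\varphi$; write $N^{N_{\mathcal F}}_{\overline\varphi}$. $[N_{\mathcal F}\times K]\subseteq[H\times_{\mathcal F}K]$: one representative of each class of the relation $(A,\overline\varphi)\sim(B,\overline\psi)$ iff $\overline\varphi=\overline\psi\,\overline\theta$ for an isomorphism $\overline\theta:B\to A$ in $\mathcal O(N_{\mathcal F})$, chosen with $A$ fully $N_{\mathcal F}$-normalized and $\overline\varphi$ represented by an $N_{\mathcal F}$-top. *)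

theory Defs
  imports "HOL-Algebra.Algebra"
begin

(* Morphisms of a fusion
   system between subgroups P, Q are represented as functions extensional on P.
   A fusion system is given by F :: 'a set => 'a set => ('a => 'a) set,
   F P Q = Hom_F(P,Q). *)

definition conjm :: "('a,'b) monoid_scheme \<Rightarrow> 'a \<Rightarrow> 'a \<Rightarrow> 'a" where
  "conjm S x = (\<lambda>y. x \<otimes>\<^bsub>S\<^esub> y \<otimes>\<^bsub>S\<^esub> inv\<^bsub>S\<^esub> x)"

definition cmor :: "('a,'b) monoid_scheme \<Rightarrow> 'a \<Rightarrow> 'a set \<Rightarrow> 'a \<Rightarrow> 'a" where
  "cmor S x P = restrict (conjm S x) P"

definition normT :: "('a,'b) monoid_scheme \<Rightarrow> 'a set \<Rightarrow> 'a set \<Rightarrow> 'a set" where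
  "normT S T P = {x \<in> T. conjm S x ` P = P}"

definition centT :: "('a,'b) monoid_scheme \<Rightarrow> 'a set \<Rightarrow> 'a set \<Rightarrow> 'a set" where
  "centT S T P = {x \<in> T. \<forall>y\<in>P. x \<otimes>\<^bsub>S\<^esub> y = y \<otimes>\<^bsub>S\<^esub> x}"

definition AutT :: "('a,'b) monoid_scheme \<Rightarrow> 'a set \<Rightarrow> 'a set \<Rightarrow> ('a \<Rightarrow> 'a) set" where
  "AutT S T P = (\<lambda>x. cmor S x P) ` normT S T P"

definition fusion_system ::
  "('a,'b) monoid_scheme \<Rightarrow> ('a set \<Rightarrow> 'a set \<Rightarrow> ('a \<Rightarrow> 'a) set) \<Rightarrow> bool" where
  "fusion_system S F \<longleftrightarrow>
     (\<forall>P Q \<phi>. \<phi> \<in> F P Q \<longrightarrow> subgroup P S \<and> subgroup Q S \<and> \<phi> \<in> extensional P \<and>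
         \<phi> \<in> hom (S\<lparr>carrier := P\<rparr>) (S\<lparr>carrier := Q\<rparr>) \<and> inj_on \<phi> P) \<and>
     (\<forall>P Q x. subgroup P S \<longrightarrow> subgroup Q S \<longrightarrow> x \<in> carrier S \<longrightarrow>
         conjm S x ` P \<subseteq> Q \<longrightarrow> cmor S x P \<in> F P Q) \<and>
     (\<forall>P Q R \<phi> \<psi>. \<phi> \<in> F P Q \<longrightarrow> \<psi> \<in> F Q R \<longrightarrow> restrict (\<psi> \<circ> \<phi>) P \<in> F P R) \<and>
     (\<forall>P Q \<phi>. \<phi> \<in> F P Q \<longrightarrow>
         \<phi> \<in> F P (\<phi> ` P) \<and> restrict (inv_into P \<phi>) (\<phi> ` P) \<in> F (\<phi> ` P) P)"

definition isoF :: "('a set \<Rightarrow> 'a set \<Rightarrow> ('a \<Rightarrow> 'a) set) \<Rightarrow> 'a set \<Rightarrow> 'a set \<Rightarrow> bool" where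
  "isoF F P Q \<longleftrightarrow> (\<exists>\<phi>\<in>F P Q. \<phi> ` P = Q)"

definition fully_normalized ::
  "('a,'b) monoid_scheme \<Rightarrow> 'a set \<Rightarrow> ('a set \<Rightarrow> 'a set \<Rightarrow> ('a \<Rightarrow> 'a) set) \<Rightarrow> 'a set \<Rightarrow> bool" where
  "fully_normalized S T F P \<longleftrightarrow> subgroup P S \<and> P \<subseteq> T \<and>
     (\<forall>P'. isoF F P P' \<longrightarrow> card (normT S T P') \<le> card (normT S T P))"

definition fully_centralized ::
  "('a,'b) monoid_scheme \<Rightarrow> 'a set \<Rightarrow> ('a set \<Rightarrow> 'a set \<Rightarrow> ('a \<Rightarrow> 'a) set) \<Rightarrow> 'a set \<Rightarrow> bool" where
  "fully_centralized S T F P \<longleftrightarrow> subgroup P S \<and> P \<subseteq> T \<and>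
     (\<forall>P'. isoF F P P' \<longrightarrow> card (centT S T P') \<le> card (centT S T P))"

definition centric ::
  "('a,'b) monoid_scheme \<Rightarrow> ('a set \<Rightarrow> 'a set \<Rightarrow> ('a \<Rightarrow> 'a) set) \<Rightarrow> 'a set \<Rightarrow> bool" where
  "centric S F P \<longleftrightarrow> subgroup P S \<and>
     (\<forall>P'. isoF F P P' \<longrightarrow> centT S (carrier S) P' \<subseteq> P')"

definition sylow_subset :: "nat \<Rightarrow> 'c set \<Rightarrow> 'c set \<Rightarrow> bool" where
  "sylow_subset p U Y \<longleftrightarrow> Y \<subseteq> U \<and> (\<exists>k. card Y = p ^ k) \<and> (card U div card Y) mod p \<noteq> 0"

definition Nphi ::
  "('a,'b) monoid_scheme \<Rightarrow> 'a set \<Rightarrow> ('a \<Rightarrow> 'a) \<Rightarrow> 'a set" where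
  "Nphi S P \<phi> = {g \<in> normT S (carrier S) P.
     restrict (\<phi> \<circ> conjm S g \<circ> inv_into P \<phi>) (\<phi> ` P) \<in> AutT S (carrier S) (\<phi> ` P)}"

(* saturation, Broto-Levi-Oliver definition *)
definition saturated ::
  "('a,'b) monoid_scheme \<Rightarrow> nat \<Rightarrow> ('a set \<Rightarrow> 'a set \<Rightarrow> ('a \<Rightarrow> 'a) set) \<Rightarrow> bool" where
  "saturated S p F \<longleftrightarrow> fusion_system S F \<and>
     (\<forall>P. fully_normalized S (carrier S) F P \<longrightarrow>
          fully_centralized S (carrier S) F P \<and> sylow_subset p (F P P) (AutT S (carrier S) P)) \<and>
     (\<forall>P \<phi>. \<phi> \<in> F P (carrier S) \<longrightarrow> fully_centralized S (carrier S) F (\<phi> ` P) \<longrightarrow>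
          (\<exists>\<psi> \<in> F (Nphi S P \<phi>) (carrier S). restrict \<psi> P = \<phi>))"

definition NF ::
  "('a,'b) monoid_scheme \<Rightarrow> ('a set \<Rightarrow> 'a set \<Rightarrow> ('a \<Rightarrow> 'a) set) \<Rightarrow> 'a set \<Rightarrow>
   'a set \<Rightarrow> 'a set \<Rightarrow> ('a \<Rightarrow> 'a) set" where
  "NF S F H A B = {\<phi> \<in> F A B. A \<subseteq> normT S (carrier S) H \<and> B \<subseteq> normT S (carrier S) H \<and>
     (\<exists>\<psi> \<in> F (A <#>\<^bsub>S\<^esub> H) (B <#>\<^bsub>S\<^esub> H). restrict \<psi> A = \<phi> \<and> \<psi> ` H = H)}"

(* class of phi in Hom_O(F)(P,Q) = Aut_Q(Q)\Hom_F(P,Q) *)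
definition orbcl ::
  "('a,'b) monoid_scheme \<Rightarrow> 'a set \<Rightarrow> 'a set \<Rightarrow> ('a \<Rightarrow> 'a) \<Rightarrow> ('a \<Rightarrow> 'a) set" where
  "orbcl S P Q \<phi> = (\<lambda>q. restrict (conjm S q \<circ> \<phi>) P) ` Q"

(* admissible pairs (A, phi-bar) for [H x_F K] *)
definition pairHK ::
  "('a,'b) monoid_scheme \<Rightarrow> ('a set \<Rightarrow> 'a set \<Rightarrow> ('a \<Rightarrow> 'a) set) \<Rightarrow> 'a set \<Rightarrow> 'a set \<Rightarrow>
   'a set \<Rightarrow> ('a \<Rightarrow> 'a) \<Rightarrow> bool" where
  "pairHK S F H K A \<phi> \<longleftrightarrow> centric S F A \<and> A \<subseteq> H \<and> \<phi> \<in> F A K"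

definition precHK ::
  "('a,'b) monoid_scheme \<Rightarrow> 'a set \<Rightarrow> 'a set \<Rightarrow>
   'a set \<Rightarrow> ('a \<Rightarrow> 'a) \<Rightarrow> 'a set \<Rightarrow> ('a \<Rightarrow> 'a) \<Rightarrow> bool" where
  "precHK S H K A \<phi> B \<psi> \<longleftrightarrow> (\<exists>h\<in>H. conjm S (inv\<^bsub>S\<^esub> h) ` A \<subseteq> B \<and>
     orbcl S (conjm S (inv\<^bsub>S\<^esub> h) ` A) K
        (restrict (\<phi> \<circ> conjm S h) (conjm S (inv\<^bsub>S\<^esub> h) ` A))
   = orbcl S (conjm S (inv\<^bsub>S\<^esub> h) ` A) K (restrict \<psi> (conjm S (inv\<^bsub>S\<^esub> h) ` A)))"

definition maximal_pair ::
  "('a,'b) monoid_scheme \<Rightarrow> ('a set \<Rightarrow> 'a set \<Rightarrow> ('a \<Rightarrow> 'a) set) \<Rightarrow> 'a set \<Rightarrow> 'a set \<Rightarrow>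
   'a set \<Rightarrow> ('a \<Rightarrow> 'a) \<Rightarrow> bool" where
  "maximal_pair S F H K A \<phi> \<longleftrightarrow> pairHK S F H K A \<phi> \<and>
     (\<forall>B \<psi>. pairHK S F H K B \<psi> \<longrightarrow> precHK S H K A \<phi> B \<psi> \<longrightarrow> precHK S H K B \<psi> A \<phi>)"

definition NNup ::
  "('a,'b) monoid_scheme \<Rightarrow> ('a set \<Rightarrow> 'a set \<Rightarrow> ('a \<Rightarrow> 'a) set) \<Rightarrow> 'a set \<Rightarrow> 'a set \<Rightarrow>
   'a set \<Rightarrow> ('a \<Rightarrow> 'a) \<Rightarrow> 'a set" where
  "NNup S F H K A \<phi> = {x \<in> normT S K (\<phi> ` A).
     restrict (inv_into A \<phi> \<circ> conjm S x \<circ> \<phi>) A \<in> NF S F H A A}"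

definition NNlow ::
  "('a,'b) monoid_scheme \<Rightarrow> ('a set \<Rightarrow> 'a set \<Rightarrow> ('a \<Rightarrow> 'a) set) \<Rightarrow> 'a set \<Rightarrow> 'a set \<Rightarrow>
   'a set \<Rightarrow> ('a \<Rightarrow> 'a) \<Rightarrow> 'a set" where
  "NNlow S F H K A \<phi> = {x \<in> normT S (normT S (carrier S) H) A.
     cmor S x A \<in> (\<lambda>\<alpha>. restrict (inv_into A \<phi> \<circ> \<alpha> \<circ> \<phi>) A) ` AutT S (NNup S F H K A \<phi>) (\<phi> ` A)}"

definition is_top ::
  "('a,'b) monoid_scheme \<Rightarrow> ('a set \<Rightarrow> 'a set \<Rightarrow> ('a \<Rightarrow> 'a) set) \<Rightarrow> 'a set \<Rightarrow> 'a set \<Rightarrow>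
   'a set \<Rightarrow> ('a \<Rightarrow> 'a) \<Rightarrow> bool" where
  "is_top S F H K A \<phi> \<longleftrightarrow>
     fully_normalized S (normT S (carrier S) H) (NF S F H) A \<and>
     AutT S (NNup S F H K A \<phi>) (\<phi> ` A) =
       (\<lambda>\<beta>. restrict (\<phi> \<circ> \<beta> \<circ> inv_into A \<phi>) (\<phi> ` A)) ` AutT S (NNlow S F H K A \<phi>) A"

end

theory Submission
  imports Defs
begin

lemma fs_mor:
  assumes "fusion_system S F" "\<phi> \<in> F P Q"
  shows "subgroup P S" "subgroup Q S" "\<phi> \<in> extensional P"
    "\<phi> \<in> hom (S\<lparr>carrier := P\<rparr>) (S\<lparr>carrier := Q\<rparr>)" "inj_on \<phi> P"
  using assms unfolding fusion_system_def by blast+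

lemma fs_img:
  assumes "fusion_system S F" "\<phi> \<in> F P Q"
  shows "\<phi> \<in> F P (\<phi> ` P)" "restrict (inv_into P \<phi>) (\<phi> ` P) \<in> F (\<phi> ` P) P"
  using assms unfolding fusion_system_def by blast+

lemma fs_comp:
  assumes "fusion_system S F" "\<phi> \<in> F P Q" "\<psi> \<in> F Q R"
  shows "restrict (\<psi> \<circ> \<phi>) P \<in> F P R"
  using assms unfolding fusion_system_def by blast

lemma fs_conj:
  assumes "fusion_system S F" "subgroup P S" "subgroup Q S" "x \<in> carrier S" "conjm S x ` P \<subseteq> Q"
  shows "cmor S x P \<in> F P Q"
  using assms unfolding fusion_system_def by blast

lemma conj_one:
  assumes "group S" "y \<in> carrier S"
  shows "conjm S \<one>\<^bsub>S\<^esub> y = y"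
  using assms by (simp add: conjm_def group.is_monoid monoid.r_one monoid.l_one monoid.inv_one)

lemma conj_one_img:
  assumes "group S" "P \<subseteq> carrier S"
  shows "conjm S \<one>\<^bsub>S\<^esub> ` P = P"
  using assms conj_one[OF assms(1)] by (simp add: subset_iff)

lemma hom_mult_F:
  assumes "fusion_system S F" "\<phi> \<in> F P Q" "a \<in> P" "b \<in> P"
  shows "\<phi> (a \<otimes>\<^bsub>S\<^esub> b) = \<phi> a \<otimes>\<^bsub>S\<^esub> \<phi> b"
  using hom_mult[OF fs_mor(4)[OF assms(1,2)], of a b] assms(3,4) by simp

lemma hom_in_F:
  assumes "fusion_system S F" "\<phi> \<in> F P Q" "a \<in> P"
  shows "\<phi> a \<in> Q"
  using hom_in_carrier[OF fs_mor(4)[OF assms(1,2)], of a] assms(3) by simp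

lemma hom_inv_F:
  assumes "group S" "fusion_system S F" "\<phi> \<in> F P Q" "a \<in> P"
  shows "\<phi> (inv\<^bsub>S\<^esub> a) = inv\<^bsub>S\<^esub> (\<phi> a)"
proof -
  have P: "subgroup P S" and Q: "subgroup Q S" using fs_mor[OF assms(2,3)] by auto
  have gh: "group_hom (S\<lparr>carrier := P\<rparr>) (S\<lparr>carrier := Q\<rparr>) \<phi>"
    unfolding group_hom_def group_hom_axioms_def
    using subgroup.subgroup_is_group[OF P assms(1)] subgroup.subgroup_is_group[OF Q assms(1)]
      fs_mor(4)[OF assms(2,3)] by blast
  have "\<phi> (inv\<^bsub>S\<lparr>carrier := P\<rparr>\<^esub> a) = inv\<^bsub>S\<lparr>carrier := Q\<rparr>\<^esub> (\<phi> a)"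
    using group_hom.hom_inv[OF gh] assms(4) by simp
  then show ?thesis
    using group.m_inv_consistent[OF assms(1) P assms(4)]
      group.m_inv_consistent[OF assms(1) Q hom_in_F[OF assms(2,3,4)]] by simp
qed

lemma hom_conj_F:
  assumes "group S" "fusion_system S F" "\<phi> \<in> F P Q" "g \<in> P" "a \<in> P"
  shows "\<phi> (conjm S g a) = conjm S (\<phi> g) (\<phi> a)"
proof -
  have P: "subgroup P S" using fs_mor[OF assms(2,3)] by auto
  have "inv\<^bsub>S\<^esub> g \<in> P" using P assms(4) by (rule subgroup.m_inv_closed)
  moreover have "g \<otimes>\<^bsub>S\<^esub> a \<in> P" using P assms(4,5) by (rule subgroup.m_closed)
  ultimately show ?thesis unfolding conjm_def
    using hom_mult_F[OF assms(2,3)] hom_inv_F[OF assms(1,2,3)] assms(4,5) by simp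
qed


lemma (in group) cancel_l1 [simp]:
  "x \<in> carrier G \<Longrightarrow> y \<in> carrier G \<Longrightarrow> x \<otimes> (inv x \<otimes> y) = y"
  by (simp add: m_assoc[symmetric])

lemma (in group) cancel_l2 [simp]:
  "x \<in> carrier G \<Longrightarrow> y \<in> carrier G \<Longrightarrow> inv x \<otimes> (x \<otimes> y) = y"
  by (simp add: m_assoc[symmetric])

lemma (in group) conj_alg1:
  assumes "g \<in> carrier G" "y \<in> carrier G"
  shows "g \<otimes> (inv g \<otimes> y \<otimes> g) \<otimes> inv g = y"
  using assms by (simp add: m_assoc)

lemma (in group) conj_alg2:
  assumes "u \<in> carrier G" "v \<in> carrier G" "b \<in> carrier G"
    and "u \<otimes> b \<otimes> inv u = v \<otimes> b \<otimes> inv v"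
  shows "(inv v \<otimes> u) \<otimes> b = b \<otimes> (inv v \<otimes> u)"
proof -
  have "u \<otimes> b = (u \<otimes> b \<otimes> inv u) \<otimes> u" using assms(1-3) by (simp add: m_assoc)
  also have "\<dots> = (v \<otimes> b \<otimes> inv v) \<otimes> u" by (simp only: assms(4))
  finally have e: "u \<otimes> b = v \<otimes> b \<otimes> inv v \<otimes> u" .
  have "(inv v \<otimes> u) \<otimes> b = inv v \<otimes> (u \<otimes> b)" using assms by (simp add: m_assoc)
  also have "\<dots> = inv v \<otimes> (v \<otimes> b \<otimes> inv v \<otimes> u)" using e by simp
  also have "\<dots> = b \<otimes> (inv v \<otimes> u)" using assms by (simp add: m_assoc[symmetric])
  finally show ?thesis .
qed

lemma (in group) conj_inv_conj:
  assumes "g \<in> carrier G" "u \<in> carrier G"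
  shows "inv g \<otimes> (g \<otimes> u \<otimes> inv g) \<otimes> g = u"
  using assms by (simp add: m_assoc)

lemma (in group) conj_inj_on:
  assumes "g \<in> carrier G"
  shows "inj_on (conjm G g) (carrier G)"
proof (rule inj_onI)
  fix u v assume u: "u \<in> carrier G" and v: "v \<in> carrier G" and e: "conjm G g u = conjm G g v"
  have "u = inv g \<otimes> (conjm G g u) \<otimes> g" using conj_inv_conj[OF assms(1) u] by (simp add: conjm_def)
  also have "\<dots> = inv g \<otimes> (conjm G g v) \<otimes> g" using e by simp
  also have "\<dots> = v" using conj_inv_conj[OF assms(1) v] by (simp add: conjm_def)
  finally show "u = v" .
qed

lemma (in group) conj_self0:
  assumes "subgroup P G" "g \<in> P"
  shows "conjm G g ` P = P"
proof -
  have gc: "g \<in> carrier G" using subgroup.mem_carrier[OF assms(1,2)] .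
  show ?thesis
  proof
    show "conjm G g ` P \<subseteq> P"
    proof
      fix z assume "z \<in> conjm G g ` P"
      then obtain y where y: "y \<in> P" "z = g \<otimes> y \<otimes> inv g" unfolding conjm_def by blast
      have "g \<otimes> y \<in> P" using subgroup.m_closed[OF assms(1) assms(2) y(1)] .
      then show "z \<in> P" using y(2) subgroup.m_closed[OF assms(1) _ subgroup.m_inv_closed[OF assms(1) assms(2)]] by simp
    qed
    show "P \<subseteq> conjm G g ` P"
    proof
      fix y assume y: "y \<in> P"
      have yc: "y \<in> carrier G" using subgroup.mem_carrier[OF assms(1) y] .
      have "inv g \<otimes> y \<in> P" using subgroup.m_closed[OF assms(1) subgroup.m_inv_closed[OF assms(1) assms(2)] y] .
      then have "inv g \<otimes> y \<otimes> g \<in> P" using subgroup.m_closed[OF assms(1) _ assms(2)] by simp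
      moreover have "y = conjm G g (inv g \<otimes> y \<otimes> g)" unfolding conjm_def
        using conj_alg1[OF gc yc] by simp
      ultimately show "y \<in> conjm G g ` P" by blast
    qed
  qed
qed

lemma one_S: "group S \<Longrightarrow> \<one>\<^bsub>S\<^esub> \<in> carrier S"
  by (simp add: group.is_monoid monoid.one_closed)

lemma conj_self:
  assumes "group S" "subgroup P S" "g \<in> P"
  shows "conjm S g ` P = P"
  using group.conj_self0[OF assms] .

lemma conj_inj_on:
  assumes "group S" "g \<in> carrier S"
  shows "inj_on (conjm S g) (carrier S)"
  using group.conj_inj_on[OF assms] .

lemma restrict_F:
  assumes "group S" "fusion_system S F" "\<psi> \<in> F Q R" "subgroup P S" "P \<subseteq> Q"
  shows "restrict \<psi> P \<in> F P R"
proof -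
  have Q: "subgroup Q S" using fs_mor[OF assms(2,3)] by auto
  have Pc: "P \<subseteq> carrier S" using subgroup.subset[OF assms(4)] .
  have "cmor S \<one>\<^bsub>S\<^esub> P \<in> F P Q"
    by (rule fs_conj[OF assms(2,4) Q one_S[OF assms(1)]]) (simp add: conj_one_img[OF assms(1) Pc] assms(5))
  from fs_comp[OF assms(2) this assms(3)]
  have "restrict (\<psi> \<circ> cmor S \<one>\<^bsub>S\<^esub> P) P \<in> F P R" .
  moreover have "restrict (\<psi> \<circ> cmor S \<one>\<^bsub>S\<^esub> P) P = restrict \<psi> P"
    using conj_one[OF assms(1)] Pc by (auto simp: cmor_def restrict_def fun_eq_iff)
  ultimately show ?thesis by simp
qed

lemma corestrict_F:
  assumes "group S" "fusion_system S F" "\<psi> \<in> F P R" "subgroup Q S" "\<psi> ` P \<subseteq> Q"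
  shows "\<psi> \<in> F P Q"
proof -
  have i: "\<psi> \<in> F P (\<psi> ` P)" using fs_img[OF assms(2,3)] by auto
  have Ps: "subgroup (\<psi> ` P) S" using fs_mor[OF assms(2) i] by auto
  have ext: "\<psi> \<in> extensional P" using fs_mor[OF assms(2,3)] by auto
  have Pc: "\<psi> ` P \<subseteq> carrier S" using subgroup.subset[OF Ps] .
  have "cmor S \<one>\<^bsub>S\<^esub> (\<psi> ` P) \<in> F (\<psi> ` P) Q"
    by (rule fs_conj[OF assms(2) Ps assms(4) one_S[OF assms(1)]]) (simp add: conj_one_img[OF assms(1) Pc] assms(5))
  from fs_comp[OF assms(2) i this]
  have "restrict (cmor S \<one>\<^bsub>S\<^esub> (\<psi> ` P) \<circ> \<psi>) P \<in> F P Q" .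
  moreover have "restrict (cmor S \<one>\<^bsub>S\<^esub> (\<psi> ` P) \<circ> \<psi>) P = \<psi>"
    using conj_one[OF assms(1)] Pc ext by (auto simp: cmor_def restrict_def fun_eq_iff extensional_def)
  ultimately show ?thesis by simp
qed

lemma isoF_trans:
  assumes "fusion_system S F" "isoF F P Q" "isoF F Q R"
  shows "isoF F P R"
proof -
  obtain \<phi> where p: "\<phi> \<in> F P Q" "\<phi> ` P = Q" using assms(2) unfolding isoF_def by blast
  obtain \<psi> where q: "\<psi> \<in> F Q R" "\<psi> ` Q = R" using assms(3) unfolding isoF_def by blast
  have "restrict (\<psi> \<circ> \<phi>) P \<in> F P R" using fs_comp[OF assms(1) p(1) q(1)] .
  moreover have "restrict (\<psi> \<circ> \<phi>) P ` P = R" using p(2) q(2) by (auto simp: image_comp)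
  ultimately show ?thesis unfolding isoF_def by blast
qed

lemma isoF_img:
  assumes "fusion_system S F" "\<phi> \<in> F P Q"
  shows "isoF F P (\<phi> ` P)"
  using fs_img[OF assms] unfolding isoF_def by blast

lemma centric_super:
  assumes "group S" "fusion_system S F" "centric S F A" "subgroup B S" "A \<subseteq> B"
  shows "centric S F B"
  unfolding centric_def
proof (intro conjI allI impI)
  show "subgroup B S" by fact
  fix P' assume "isoF F B P'"
  then obtain \<theta> where t: "\<theta> \<in> F B P'" "\<theta> ` B = P'" unfolding isoF_def by blast
  have As: "subgroup A S" using assms(3) unfolding centric_def by blast
  have "restrict \<theta> A \<in> F A P'" using restrict_F[OF assms(1,2) t(1) As assms(5)] .
  from isoF_img[OF assms(2) this] have "isoF F A (\<theta> ` A)" by simp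
  then have c: "centT S (carrier S) (\<theta> ` A) \<subseteq> \<theta> ` A" using assms(3) unfolding centric_def by blast
  have "\<theta> ` A \<subseteq> P'" using t(2) assms(5) by blast
  then have "centT S (carrier S) P' \<subseteq> centT S (carrier S) (\<theta> ` A)" unfolding centT_def by blast
  then show "centT S (carrier S) P' \<subseteq> P'" using c \<open>\<theta> ` A \<subseteq> P'\<close> by blast
qed


lemma fully_centralized_img:
  assumes "group S" "finite (carrier S)" "fusion_system S F" "centric S F A" "\<phi> \<in> F A Q"
  shows "fully_centralized S (carrier S) F (\<phi> ` A)"
  unfolding fully_centralized_def
proof (intro conjI allI impI)
  have i: "\<phi> \<in> F A (\<phi> ` A)" using fs_img[OF assms(3,5)] by auto
  show PA: "subgroup (\<phi> ` A) S" using fs_mor[OF assms(3) i] by auto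
  then show "\<phi> ` A \<subseteq> carrier S" by (rule subgroup.subset)
  fix P' assume iP: "isoF F (\<phi> ` A) P'"
  then obtain \<theta> where t: "\<theta> \<in> F (\<phi> ` A) P'" "\<theta> ` (\<phi> ` A) = P'" unfolding isoF_def by blast
  have "isoF F A P'" using isoF_trans[OF assms(3) isoF_img[OF assms(3,5)] iP] .
  then have cP: "centT S (carrier S) P' \<subseteq> P'" using assms(4) unfolding centric_def by blast
  define \<theta>' where "\<theta>' = restrict (inv_into (\<phi> ` A) \<theta>) P'"
  have t': "\<theta>' \<in> F P' (\<phi> ` A)" using fs_img(2)[OF assms(3) t(1)] unfolding \<theta>'_def t(2) .
  have injt: "inj_on \<theta> (\<phi> ` A)" using fs_mor[OF assms(3) t(1)] by auto
  have inj: "inj_on \<theta>' P'" using fs_mor[OF assms(3) t'] by auto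
  have inv: "\<theta>' (\<theta> w) = w" if "w \<in> \<phi> ` A" for w
  proof -
    have "\<theta> w \<in> P'" using t(2) that by blast
    then show ?thesis unfolding \<theta>'_def using inv_into_f_f[OF injt that] by simp
  qed
  have "\<theta>' ` centT S (carrier S) P' \<subseteq> centT S (carrier S) (\<phi> ` A)"
  proof
    fix u assume "u \<in> \<theta>' ` centT S (carrier S) P'"
    then obtain z where z: "z \<in> centT S (carrier S) P'" "u = \<theta>' z" by blast
    have zP: "z \<in> P'" using z cP by blast
    have uA: "u \<in> \<phi> ` A" using z(2) hom_in_F[OF assms(3) t' zP] by simp
    have "u \<otimes>\<^bsub>S\<^esub> w = w \<otimes>\<^bsub>S\<^esub> u" if w: "w \<in> \<phi> ` A" for w
    proof -
      have wP: "\<theta> w \<in> P'" using hom_in_F[OF assms(3) t(1) w] .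
      have zc: "z \<otimes>\<^bsub>S\<^esub> \<theta> w = \<theta> w \<otimes>\<^bsub>S\<^esub> z" using z(1) wP unfolding centT_def by blast
      have "u \<otimes>\<^bsub>S\<^esub> w = \<theta>' z \<otimes>\<^bsub>S\<^esub> \<theta>' (\<theta> w)" using z(2) inv[OF w] by simp
      also have "\<dots> = \<theta>' (z \<otimes>\<^bsub>S\<^esub> \<theta> w)" using hom_mult_F[OF assms(3) t' zP wP] by simp
      also have "\<dots> = \<theta>' (\<theta> w \<otimes>\<^bsub>S\<^esub> z)" using zc by simp
      also have "\<dots> = \<theta>' (\<theta> w) \<otimes>\<^bsub>S\<^esub> \<theta>' z" using hom_mult_F[OF assms(3) t' wP zP] .
      also have "\<dots> = w \<otimes>\<^bsub>S\<^esub> u" using z(2) inv[OF w] by simp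
      finally show ?thesis .
    qed
    moreover have "u \<in> carrier S" using subgroup.subset[OF PA] uA by (rule subsetD)
    ultimately show "u \<in> centT S (carrier S) (\<phi> ` A)" unfolding centT_def by simp
  qed
  moreover have "finite (centT S (carrier S) (\<phi> ` A))"
    by (rule finite_subset[OF _ assms(2)]) (simp add: centT_def)
  moreover have "inj_on \<theta>' (centT S (carrier S) P')" using inj_on_subset[OF inj cP] .
  ultimately show "card (centT S (carrier S) P') \<le> card (centT S (carrier S) (\<phi> ` A))"
    by (intro card_inj_on_le)
qed

lemma transport1:
  assumes "fusion_system S F" "\<phi> \<in> F A Q" "conjm S g ` A = A"
    and "\<forall>a\<in>A. \<phi> (conjm S g a) = conjm S y (\<phi> a)"
  shows "restrict (\<phi> \<circ> conjm S g \<circ> inv_into A \<phi>) (\<phi> ` A) = cmor S y (\<phi> ` A)"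
proof -
  have inj: "inj_on \<phi> A" using fs_mor[OF assms(1,2)] by auto
  show ?thesis
  proof (rule ext)
    fix b show "restrict (\<phi> \<circ> conjm S g \<circ> inv_into A \<phi>) (\<phi> ` A) b = cmor S y (\<phi> ` A) b"
    proof (cases "b \<in> \<phi> ` A")
      case True
      then obtain a where a: "a \<in> A" "b = \<phi> a" by blast
      then show ?thesis using inv_into_f_f[OF inj a(1)] assms(4) True by (simp add: cmor_def)
    qed (simp add: cmor_def)
  qed
qed

lemma transport2:
  assumes "fusion_system S F" "\<phi> \<in> F A Q" "conjm S g ` A = A"
    and "\<forall>a\<in>A. \<phi> (conjm S g a) = conjm S y (\<phi> a)"
  shows "cmor S g A = restrict (inv_into A \<phi> \<circ> conjm S y \<circ> \<phi>) A"
proof -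
  have inj: "inj_on \<phi> A" using fs_mor[OF assms(1,2)] by auto
  show ?thesis
  proof (rule ext)
    fix a show "cmor S g A a = restrict (inv_into A \<phi> \<circ> conjm S y \<circ> \<phi>) A a"
    proof (cases "a \<in> A")
      case True
      have c: "conjm S g a \<in> A" using assms(3) True by blast
      have "inv_into A \<phi> (\<phi> (conjm S g a)) = conjm S g a" using inv_into_f_f[OF inj c] .
      then have "inv_into A \<phi> (conjm S y (\<phi> a)) = conjm S g a" using assms(4) True by simp
      then show ?thesis using True by (simp add: cmor_def)
    qed (simp add: cmor_def)
  qed
qed

lemma transport_back:
  assumes "fusion_system S F" "\<phi> \<in> F A Q" "conjm S y ` (\<phi> ` A) = \<phi> ` A"
    and "cmor S g A = restrict (inv_into A \<phi> \<circ> cmor S y (\<phi> ` A) \<circ> \<phi>) A" "a \<in> A"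
  shows "\<phi> (conjm S g a) = conjm S y (\<phi> a)"
proof -
  have "cmor S g A a = inv_into A \<phi> (conjm S y (\<phi> a))"
    using assms(4,5) by (simp add: cmor_def)
  then have "conjm S g a = inv_into A \<phi> (conjm S y (\<phi> a))" using assms(5) by (simp add: cmor_def)
  moreover have "conjm S y (\<phi> a) \<in> \<phi> ` A" using assms(3,5) by blast
  ultimately show ?thesis by (simp add: f_inv_into_f)
qed

lemma restrict_cmor_conjm:
  assumes "\<phi> ` A \<subseteq> P"
  shows "restrict (f \<circ> cmor S y P \<circ> \<phi>) A = restrict (f \<circ> conjm S y \<circ> \<phi>) A"
  using assms by (auto simp: cmor_def restrict_def fun_eq_iff)


lemma set_mult_sub:
  assumes "group S" "subgroup H S" "subgroup A S" "A \<subseteq> H"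
  shows "A <#>\<^bsub>S\<^esub> H = H"
proof
  show "A <#>\<^bsub>S\<^esub> H \<subseteq> H"
  proof
    fix z assume "z \<in> A <#>\<^bsub>S\<^esub> H"
    then obtain a h where ah: "a \<in> A" "h \<in> H" "z = a \<otimes>\<^bsub>S\<^esub> h" unfolding set_mult_def by blast
    have "a \<in> H" using assms(4) ah(1) by (rule subsetD)
    then show "z \<in> H" using subgroup.m_closed[OF assms(2) _ ah(2)] ah(3) by simp
  qed
  show "H \<subseteq> A <#>\<^bsub>S\<^esub> H"
  proof
    fix h assume h: "h \<in> H"
    have hc: "h \<in> carrier S" using subgroup.mem_carrier[OF assms(2) h] .
    have "h = \<one>\<^bsub>S\<^esub> \<otimes>\<^bsub>S\<^esub> h" using hc by (simp add: group.is_monoid[OF assms(1)] monoid.l_one)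
    moreover have "\<one>\<^bsub>S\<^esub> \<in> A" using subgroup.one_closed[OF assms(3)] .
    ultimately show "h \<in> A <#>\<^bsub>S\<^esub> H" unfolding set_mult_def using h by blast
  qed
qed

lemma preimage_subgroup:
  assumes "group S" "fusion_system S F" "\<psi> \<in> F N Q" "subgroup H S" "subgroup K S"
    and "A \<subseteq> {g \<in> N. g \<in> H \<and> \<psi> g \<in> K}" "A \<noteq> {}"
  shows "subgroup {g \<in> N. g \<in> H \<and> \<psi> g \<in> K} S"
proof -
  interpret group S by fact
  have Ns: "subgroup N S" using fs_mor[OF assms(2,3)] by auto
  show ?thesis
  proof (rule subgroupI)
    show "{g \<in> N. g \<in> H \<and> \<psi> g \<in> K} \<subseteq> carrier S" using subgroup.subset[OF Ns] by blast
    show "{g \<in> N. g \<in> H \<and> \<psi> g \<in> K} \<noteq> {}" using assms(6,7) by blast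
  next
    fix a assume a: "a \<in> {g \<in> N. g \<in> H \<and> \<psi> g \<in> K}"
    then have aN: "a \<in> N" and aH: "a \<in> H" and aK: "\<psi> a \<in> K" by auto
    have "inv\<^bsub>S\<^esub> a \<in> N" using subgroup.m_inv_closed[OF Ns aN] .
    moreover have "inv\<^bsub>S\<^esub> a \<in> H" using subgroup.m_inv_closed[OF assms(4) aH] .
    moreover have "\<psi> (inv\<^bsub>S\<^esub> a) \<in> K" using hom_inv_F[OF assms(1,2,3) aN] subgroup.m_inv_closed[OF assms(5) aK] by simp
    ultimately show "inv\<^bsub>S\<^esub> a \<in> {g \<in> N. g \<in> H \<and> \<psi> g \<in> K}" by simp
  next
    fix a b assume a: "a \<in> {g \<in> N. g \<in> H \<and> \<psi> g \<in> K}" and b: "b \<in> {g \<in> N. g \<in> H \<and> \<psi> g \<in> K}"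
    then have aN: "a \<in> N" and aH: "a \<in> H" and aK: "\<psi> a \<in> K"
      and bN: "b \<in> N" and bH: "b \<in> H" and bK: "\<psi> b \<in> K" by auto
    have "a \<otimes>\<^bsub>S\<^esub> b \<in> N" using subgroup.m_closed[OF Ns aN bN] .
    moreover have "a \<otimes>\<^bsub>S\<^esub> b \<in> H" using subgroup.m_closed[OF assms(4) aH bH] .
    moreover have "\<psi> (a \<otimes>\<^bsub>S\<^esub> b) \<in> K" using hom_mult_F[OF assms(2,3) aN bN] subgroup.m_closed[OF assms(5) aK bK] by simp
    ultimately show "a \<otimes>\<^bsub>S\<^esub> b \<in> {g \<in> N. g \<in> H \<and> \<psi> g \<in> K}" by simp
  qed
qed

lemma centralizer_elem:
  assumes "group S" "u \<in> carrier S" "v \<in> carrier S" "b \<in> carrier S"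
    and "conjm S u b = conjm S v b"
  shows "(inv\<^bsub>S\<^esub> v \<otimes>\<^bsub>S\<^esub> u) \<otimes>\<^bsub>S\<^esub> b = b \<otimes>\<^bsub>S\<^esub> (inv\<^bsub>S\<^esub> v \<otimes>\<^bsub>S\<^esub> u)"
  using group.conj_alg2[OF assms(1-4)] assms(5) unfolding conjm_def by blast

lemma recompose:
  assumes "group S" "u \<in> carrier S" "v \<in> carrier S"
  shows "v \<otimes>\<^bsub>S\<^esub> (inv\<^bsub>S\<^esub> v \<otimes>\<^bsub>S\<^esub> u) = u"
  using group.cancel_l1[OF assms(1,3,2)] .

lemma normT_memI: "x \<in> T \<Longrightarrow> conjm S x ` P = P \<Longrightarrow> x \<in> normT S T P"
  by (simp add: normT_def)

theorem corollary4p25: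
  fixes S :: "('a,'b) monoid_scheme" and p n :: nat
    and F :: "'a set \<Rightarrow> 'a set \<Rightarrow> ('a \<Rightarrow> 'a) set"
    and H K A :: "'a set" and \<phi> :: "'a \<Rightarrow> 'a"
  assumes "group S" and "finite (carrier S)" and "Factorial_Ring.prime p" and "card (carrier S) = p ^ n"
    and "saturated S p F"
    and "subgroup H S" and "fully_normalized S (carrier S) F H" and "centric S F H"
    and "centric S F K"
    and "maximal_pair S F H K A \<phi>"
    and "fully_normalized S (normT S (carrier S) H) (NF S F H) A"
    and "is_top S F H K A \<phi>"
  shows "A = NNlow S F H K A \<phi> \<inter> H"
proof -
  have G: "group S" by fact
  have fs: "fusion_system S F" using assms(5) unfolding saturated_def by blast
  have satext: "\<And>P \<psi>. \<psi> \<in> F P (carrier S) \<Longrightarrow> fully_centralized S (carrier S) F (\<psi> ` P) \<Longrightarrow>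
      \<exists>\<psi>'\<in>F (Nphi S P \<psi>) (carrier S). restrict \<psi>' P = \<psi>"
    using assms(5) unfolding saturated_def by blast
  have pA: "pairHK S F H K A \<phi>" using assms(10) unfolding maximal_pair_def by blast
  have mx: "\<And>B \<psi>. pairHK S F H K B \<psi> \<Longrightarrow> precHK S H K A \<phi> B \<psi> \<Longrightarrow> precHK S H K B \<psi> A \<phi>"
    using assms(10) unfolding maximal_pair_def by blast
  have cA: "centric S F A" and AH: "A \<subseteq> H" and \<phi>K: "\<phi> \<in> F A K" using pA unfolding pairHK_def by blast+
  have As: "subgroup A S" using cA unfolding centric_def by blast
  have Ks: "subgroup K S" using assms(9) unfolding centric_def by blast
  have Hs: "subgroup H S" by fact
  have \<phi>i: "\<phi> \<in> F A (\<phi> ` A)" using fs_img(1)[OF fs \<phi>K] .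
  have \<phi>As: "subgroup (\<phi> ` A) S" using fs_mor(2)[OF fs \<phi>i] .
  have c\<phi>A: "centT S (carrier S) (\<phi> ` A) \<subseteq> \<phi> ` A"
    using cA isoF_img[OF fs \<phi>K] unfolding centric_def by blast
  have \<phi>AK: "\<phi> ` A \<subseteq> K" using hom_in_F[OF fs \<phi>K] by blast
  have Acar: "A \<subseteq> carrier S" using subgroup.subset[OF As] .
  have Hcar: "H \<subseteq> carrier S" using subgroup.subset[OF Hs] .
  have \<phi>Acar: "\<phi> ` A \<subseteq> carrier S" using subgroup.subset[OF \<phi>As] .
  have \<phi>S: "\<phi> \<in> F A (carrier S)"
    using corestrict_F[OF G fs \<phi>K group.subgroup_self[OF G] \<phi>Acar] .
  have \<phi>ext: "\<phi> \<in> extensional A" using fs_mor(3)[OF fs \<phi>K] .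
  have AN: "A \<subseteq> normT S (carrier S) H"
  proof
    fix a assume a: "a \<in> A"
    have "a \<in> H" using AH a by (rule subsetD)
    then have "conjm S a ` H = H" using conj_self[OF G Hs] by simp
    moreover have "a \<in> carrier S" using Acar a by (rule subsetD)
    ultimately show "a \<in> normT S (carrier S) H" unfolding normT_def by simp
  qed
  have nphi: "a \<in> normT S (carrier S) A \<and>
      restrict (\<phi> \<circ> conjm S a \<circ> inv_into A \<phi>) (\<phi> ` A) \<in> AutT S (carrier S) (\<phi> ` A)"
    if a: "a \<in> A" for a
  proof
    have ac: "a \<in> carrier S" using Acar a by (rule subsetD)
    have nA: "conjm S a ` A = A" using conj_self[OF G As a] .
    then show "a \<in> normT S (carrier S) A" using ac unfolding normT_def by simp
    have \<phi>aA: "\<phi> a \<in> \<phi> ` A" using a by (rule imageI)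
    have nphiA: "conjm S (\<phi> a) ` (\<phi> ` A) = \<phi> ` A" using conj_self[OF G \<phi>As \<phi>aA] .
    have pw: "\<forall>b\<in>A. \<phi> (conjm S a b) = conjm S (\<phi> a) (\<phi> b)" using hom_conj_F[OF G fs \<phi>K a] by blast
    have "restrict (\<phi> \<circ> conjm S a \<circ> inv_into A \<phi>) (\<phi> ` A) = cmor S (\<phi> a) (\<phi> ` A)"
      using transport1[OF fs \<phi>K nA pw] .
    moreover have "\<phi> a \<in> normT S (carrier S) (\<phi> ` A)" using nphiA \<phi>Acar \<phi>aA unfolding normT_def by blast
    ultimately show "restrict (\<phi> \<circ> conjm S a \<circ> inv_into A \<phi>) (\<phi> ` A) \<in> AutT S (carrier S) (\<phi> ` A)"
      unfolding AutT_def by simp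
  qed
  show ?thesis
  proof (rule equalityI)
    show "A \<subseteq> NNlow S F H K A \<phi> \<inter> H"
    proof
      fix a assume a: "a \<in> A"
      have aH: "a \<in> H" using AH a by (rule subsetD)
      have ac: "a \<in> carrier S" using Acar a by (rule subsetD)
      have \<phi>aA: "\<phi> a \<in> \<phi> ` A" using a by (rule imageI)
      have \<phi>aK: "\<phi> a \<in> K" using \<phi>AK \<phi>aA by (rule subsetD)
      have nA: "conjm S a ` A = A" using conj_self[OF G As a] .
      have nphiA: "conjm S (\<phi> a) ` (\<phi> ` A) = \<phi> ` A" using conj_self[OF G \<phi>As \<phi>aA] .
      have pw: "\<forall>b\<in>A. \<phi> (conjm S a b) = conjm S (\<phi> a) (\<phi> b)" using hom_conj_F[OF G fs \<phi>K a] by blast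
      have tr: "cmor S a A = restrict (inv_into A \<phi> \<circ> conjm S (\<phi> a) \<circ> \<phi>) A"
        using transport2[OF fs \<phi>K nA pw] .
      have cNF: "cmor S a A \<in> NF S F H A A"
      proof -
        have AHe: "A <#>\<^bsub>S\<^esub> H = H" using set_mult_sub[OF G Hs As AH] .
        have nH: "conjm S a ` H = H" using conj_self[OF G Hs aH] .
        have m1: "cmor S a A \<in> F A A" using fs_conj[OF fs As As ac] nA by simp
        have m2: "cmor S a H \<in> F H H" using fs_conj[OF fs Hs Hs ac] nH by simp
        have r: "restrict (cmor S a H) A = cmor S a A" using AH by (auto simp: cmor_def restrict_def fun_eq_iff)
        have i: "cmor S a H ` H = H" using nH by (simp add: cmor_def)
        have "\<exists>\<psi> \<in> F (A <#>\<^bsub>S\<^esub> H) (A <#>\<^bsub>S\<^esub> H). restrict \<psi> A = cmor S a A \<and> \<psi> ` H = H"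
          unfolding AHe using m2 r i by blast
        then show ?thesis unfolding NF_def using m1 AN by blast
      qed
      have \<phi>aNNup: "\<phi> a \<in> NNup S F H K A \<phi>"
        unfolding NNup_def normT_def using \<phi>aK nphiA tr cNF by simp
      have "cmor S (\<phi> a) (\<phi> ` A) \<in> AutT S (NNup S F H K A \<phi>) (\<phi> ` A)"
        unfolding AutT_def normT_def using \<phi>aNNup nphiA by blast
      moreover have "cmor S a A = restrict (inv_into A \<phi> \<circ> cmor S (\<phi> a) (\<phi> ` A) \<circ> \<phi>) A"
        using tr restrict_cmor_conjm[of \<phi> A "\<phi> ` A" "inv_into A \<phi>" S "\<phi> a"] by simp
      ultimately have "cmor S a A \<in> (\<lambda>\<alpha>. restrict (inv_into A \<phi> \<circ> \<alpha> \<circ> \<phi>) A) ` AutT S (NNup S F H K A \<phi>) (\<phi> ` A)"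
        by blast
      moreover have "a \<in> normT S (normT S (carrier S) H) A"
        using normT_memI[OF subsetD[OF AN a] nA] .
      ultimately have "a \<in> NNlow S F H K A \<phi>" unfolding NNlow_def by blast
      then show "a \<in> NNlow S F H K A \<phi> \<inter> H" using aH by blast
    qed
  next
    show "NNlow S F H K A \<phi> \<inter> H \<subseteq> A"
    proof
      fix x assume x: "x \<in> NNlow S F H K A \<phi> \<inter> H"
      have xH: "x \<in> H" using x by blast
      have xN: "x \<in> normT S (normT S (carrier S) H) A"
        and xa: "cmor S x A \<in> (\<lambda>\<alpha>. restrict (inv_into A \<phi> \<circ> \<alpha> \<circ> \<phi>) A) ` AutT S (NNup S F H K A \<phi>) (\<phi> ` A)"
        using x unfolding NNlow_def by blast+
      have xc: "x \<in> carrier S" and nxA: "conjm S x ` A = A" using xN unfolding normT_def by blast+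
      obtain y where yN: "y \<in> normT S (NNup S F H K A \<phi>) (\<phi> ` A)"
        and cx: "cmor S x A = restrict (inv_into A \<phi> \<circ> cmor S y (\<phi> ` A) \<circ> \<phi>) A"
        using xa unfolding AutT_def by blast
      have yK: "y \<in> K" and nyA: "conjm S y ` (\<phi> ` A) = \<phi> ` A"
        using yN unfolding normT_def NNup_def by blast+
      have yc: "y \<in> carrier S" using subgroup.subset[OF Ks] yK by (rule subsetD)
      have pw: "\<And>a. a \<in> A \<Longrightarrow> \<phi> (conjm S x a) = conjm S y (\<phi> a)"
        using transport_back[OF fs \<phi>K nyA cx] .
      have fc: "fully_centralized S (carrier S) F (\<phi> ` A)"
        using fully_centralized_img[OF G assms(2) fs cA \<phi>K] .
      obtain \<psi> where \<psi>: "\<psi> \<in> F (Nphi S A \<phi>) (carrier S)" and \<psi>A: "restrict \<psi> A = \<phi>"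
        using satext[OF \<phi>S fc] by blast
      define N where "N = Nphi S A \<phi>"
      have \<psi>N: "\<psi> \<in> F N (carrier S)" using \<psi> unfolding N_def .
      have xNN: "x \<in> N"
      proof -
        have "restrict (\<phi> \<circ> conjm S x \<circ> inv_into A \<phi>) (\<phi> ` A) = cmor S y (\<phi> ` A)"
          using transport1[OF fs \<phi>K nxA] pw by blast
        moreover have "y \<in> normT S (carrier S) (\<phi> ` A)" using yc nyA unfolding normT_def by simp
        ultimately have "restrict (\<phi> \<circ> conjm S x \<circ> inv_into A \<phi>) (\<phi> ` A) \<in> AutT S (carrier S) (\<phi> ` A)"
          unfolding AutT_def by simp
        moreover have "x \<in> normT S (carrier S) A" using xc nxA unfolding normT_def by simp
        ultimately show ?thesis unfolding N_def Nphi_def by simp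
      qed
      have AN': "A \<subseteq> N" unfolding N_def Nphi_def using nphi by blast
      have \<psi>a: "\<psi> a = \<phi> a" if "a \<in> A" for a
        using fun_cong[OF \<psi>A, of a] that by simp
      define B where "B = {g \<in> N. g \<in> H \<and> \<psi> g \<in> K}"
      have AB: "A \<subseteq> B" unfolding B_def using AN' AH \<psi>a \<phi>AK by auto
      have Ane: "A \<noteq> {}" using subgroup.one_closed[OF As] by blast
      have Bs: "subgroup B S" unfolding B_def
        using preimage_subgroup[OF G fs \<psi>N Hs Ks _ Ane] AB unfolding B_def by blast
      have BN: "B \<subseteq> N" unfolding B_def by blast
      have Bcar: "B \<subseteq> carrier S" using subgroup.subset[OF Bs] .
      have "restrict \<psi> B \<in> F B (carrier S)" using restrict_F[OF G fs \<psi>N Bs BN] .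
      moreover have "restrict \<psi> B ` B \<subseteq> K" unfolding B_def by auto
      ultimately have \<psi>B: "restrict \<psi> B \<in> F B K" using corestrict_F[OF G fs _ Ks] by blast
      have cB: "centric S F B" using centric_super[OF G fs cA Bs AB] .
      have pB: "pairHK S F H K B (restrict \<psi> B)" unfolding pairHK_def
        using cB \<psi>B B_def by blast
      have one: "\<one>\<^bsub>S\<^esub> \<in> H" using subgroup.one_closed[OF Hs] .
      have inv1: "inv\<^bsub>S\<^esub> \<one>\<^bsub>S\<^esub> = \<one>\<^bsub>S\<^esub>" using monoid.inv_one[OF group.is_monoid[OF G]] .
      have cA1: "conjm S (inv\<^bsub>S\<^esub> \<one>\<^bsub>S\<^esub>) ` A = A" using conj_one_img[OF G Acar] inv1 by simp
      have r1: "restrict (\<phi> \<circ> conjm S \<one>\<^bsub>S\<^esub>) A = \<phi>"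
      proof (rule ext)
        fix a show "restrict (\<phi> \<circ> conjm S \<one>\<^bsub>S\<^esub>) A a = \<phi> a"
        proof (cases "a \<in> A")
          case True
          then have "a \<in> carrier S" using Acar by blast
          then show ?thesis using True conj_one[OF G] by simp
        next
          case False
          then show ?thesis using \<phi>ext by (simp add: extensional_def)
        qed
      qed
      have r2: "restrict (restrict \<psi> B) A = \<phi>" using AB \<psi>A by (simp add: Int_absorb1)
      have "conjm S (inv\<^bsub>S\<^esub> \<one>\<^bsub>S\<^esub>) ` A \<subseteq> B \<and>
        orbcl S (conjm S (inv\<^bsub>S\<^esub> \<one>\<^bsub>S\<^esub>) ` A) K
          (restrict (\<phi> \<circ> conjm S \<one>\<^bsub>S\<^esub>) (conjm S (inv\<^bsub>S\<^esub> \<one>\<^bsub>S\<^esub>) ` A))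
        = orbcl S (conjm S (inv\<^bsub>S\<^esub> \<one>\<^bsub>S\<^esub>) ` A) K (restrict (restrict \<psi> B) (conjm S (inv\<^bsub>S\<^esub> \<one>\<^bsub>S\<^esub>) ` A))"
        unfolding cA1 using AB r1 r2 by simp
      then have prec: "precHK S H K A \<phi> B (restrict \<psi> B)" unfolding precHK_def
        using one inv1 by metis
      from mx[OF pB prec] obtain h where h: "h \<in> H" "conjm S (inv\<^bsub>S\<^esub> h) ` B \<subseteq> A"
        unfolding precHK_def by blast
      have hc: "inv\<^bsub>S\<^esub> h \<in> carrier S" using group.inv_closed[OF G] Hcar h(1) by blast
      have "inj_on (conjm S (inv\<^bsub>S\<^esub> h)) B" using inj_on_subset[OF conj_inj_on[OF G hc] Bcar] .
      moreover have "finite A" using finite_subset[OF Acar assms(2)] .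
      ultimately have "card B \<le> card A" using h(2) by (intro card_inj_on_le)
      moreover have "finite B" using finite_subset[OF Bcar assms(2)] .
      ultimately have AeB: "A = B" using card_seteq AB by blast
      have \<psi>xc: "\<psi> x \<in> carrier S" using hom_in_F[OF fs \<psi>N xNN] .
      have "inv\<^bsub>S\<^esub> y \<otimes>\<^bsub>S\<^esub> \<psi> x \<in> centT S (carrier S) (\<phi> ` A)"
        unfolding centT_def
      proof (intro CollectI conjI ballI)
        show "inv\<^bsub>S\<^esub> y \<otimes>\<^bsub>S\<^esub> \<psi> x \<in> carrier S"
          using group.inv_closed[OF G yc] \<psi>xc by (simp add: monoid.m_closed[OF group.is_monoid[OF G]])
        fix b assume b: "b \<in> \<phi> ` A"
        then obtain a where a: "a \<in> A" "b = \<phi> a" by blast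
        have aN: "a \<in> N" using AN' a(1) by (rule subsetD)
        have xa: "conjm S x a \<in> A" using nxA a(1) by blast
        have "\<psi> (conjm S x a) = conjm S (\<psi> x) (\<psi> a)" using hom_conj_F[OF G fs \<psi>N xNN aN] .
        moreover have "\<psi> (conjm S x a) = conjm S y (\<phi> a)" using \<psi>a[OF xa] pw[OF a(1)] by simp
        ultimately have "conjm S (\<psi> x) b = conjm S y b" using \<psi>a[OF a(1)] a(2) by simp
        moreover have "b \<in> carrier S" using \<phi>Acar b by (rule subsetD)
        ultimately show "(inv\<^bsub>S\<^esub> y \<otimes>\<^bsub>S\<^esub> \<psi> x) \<otimes>\<^bsub>S\<^esub> b = b \<otimes>\<^bsub>S\<^esub> (inv\<^bsub>S\<^esub> y \<otimes>\<^bsub>S\<^esub> \<psi> x)"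
          using centralizer_elem[OF G \<psi>xc yc] by blast
      qed
      then have "inv\<^bsub>S\<^esub> y \<otimes>\<^bsub>S\<^esub> \<psi> x \<in> K" using c\<phi>A \<phi>AK by blast
      then have "y \<otimes>\<^bsub>S\<^esub> (inv\<^bsub>S\<^esub> y \<otimes>\<^bsub>S\<^esub> \<psi> x) \<in> K" using subgroup.m_closed[OF Ks yK] by blast
      then have "\<psi> x \<in> K" using recompose[OF G \<psi>xc yc] by simp
      then have "x \<in> B" unfolding B_def using xNN xH by blast
      then show "x \<in> A" using AeB by simp
    qed
  qed
qed

end
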